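(* Let $n\ge 2$ be even and $r\ge 1$, let $V=\{1,\dots,n\}$, $R=\{n+1,\dots,n+r\}$, and let $A^R=(a_{ij})_{i,j\in V\cup R}$ be a skew-symmetric complex matrix with zero column sums, with associated graphs $G^R$ (on $V\cup R$) and $G$ (on $V$). Let $\mathcal{M}$ be the set of perfect matchings of $G$. Let $\mathcal{F}$ be the set of spanning forests of $G^R$ satisfying Condition (C) (without reference matching), and for $M_0\in\mathcal{M}$ let $\mathcal{F}(M_0)$ be the set of spanning forests of $G^R$ compatible with $M_0$ satisfying Condition (C) relative to $M_0$. Then $$\mathcal{F}=\bigcup_{M_0\in\mathcal{M}}\mathcal{F}(M_0).$$
   Context: $G^R$ has vertex set $V\cup R$ and an edge $ij$ whenever $a_{ij}\ne0$; $G$ is its induced subgraph on $V$. A spanning forest of $G^R$ is a set $F$ of oriented edges of $G^R$ containing no cycle such that each vertex of $V$ has exactly one outgoing edge in $F$ and vertices of $R$ have none. $F$ is compatible with a perfect matching $M_0$ if, forgetting orientations, $F\supseteq M_0$. Trimming algorithm, applied to a spanning forest $F$: set $F_1=F$. At step $i\ge1$, let $\ell^i$ be the leaf of $F_i$ (vertex of $V$ with an outgoing edge in $F_i$ and no incoming edge in $F_i$) with the largest label. Follow the unique directed path in $F_i$ from $\ell^i$, stopping at the first vertex reached which is a vertex of $R$, or a fork (vertex with more than one incoming edge in $F_i$), or a vertex with label smaller than $\ell^i$; call it $\lambda_{\ell^i}$. Set $F_{i+1}=F_i\setminus\lambda_{\ell^i}$; stop when $F_{i+1}$ is empty, after $N$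 steps. Condition (C) (without reference matching): each path $\lambda_{\ell^1},\dots,\lambda_{\ell^N}$ has even length. Condition (C) relative to $M_0$: each such path has even length and its first edge belongs to $M_0$. *)

theory Defs
  imports Complex_Main
begin

text \<open>Vertices are natural numbers: V = {1..n}, R = {n+1..n+r}.
  The matrix A^R is a function a :: nat => nat => complex, only read on V \<union> R.
  Oriented edges are pairs (i,j), meaning i -> j.\<close>

definition Vset :: "nat \<Rightarrow> nat set" where
  "Vset n = {1..n}"

definition Rset :: "nat \<Rightarrow> nat \<Rightarrow> nat set" where
  "Rset n r = {n+1..n+r}"

definition spanning_forest :: "nat \<Rightarrow> nat \<Rightarrow> (nat \<Rightarrow> nat \<Rightarrow> complex) \<Rightarrow> (nat \<times> nat) set \<Rightarrow> bool" where
  "spanning_forest n r a F \<longleftrightarrow>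
     F \<subseteq> {(i,j). i \<in> Vset n \<union> Rset n r \<and> j \<in> Vset n \<union> Rset n r \<and> i \<noteq> j \<and> a i j \<noteq> 0}
   \<and> acyclic F
   \<and> (\<forall>v\<in>Vset n. \<exists>!w. (v,w) \<in> F)
   \<and> (\<forall>v\<in>Rset n r. \<forall>w. (v,w) \<notin> F)"

definition perfect_matchings :: "nat \<Rightarrow> (nat \<Rightarrow> nat \<Rightarrow> complex) \<Rightarrow> nat set set set" where
  "perfect_matchings n a = {M.
      M \<subseteq> {{i,j} | i j. i \<in> Vset n \<and> j \<in> Vset n \<and> i \<noteq> j \<and> a i j \<noteq> 0}
    \<and> (\<forall>v\<in>Vset n. \<exists>!e. e \<in> M \<and> v \<in> e)}"

definition compatible :: "nat set set \<Rightarrow> (nat \<times> nat) set \<Rightarrow> bool" where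
  "compatible M F \<longleftrightarrow> (\<forall>e\<in>M. \<exists>i j. (i,j) \<in> F \<and> e = {i,j})"

definition is_leaf :: "nat \<Rightarrow> (nat \<times> nat) set \<Rightarrow> nat \<Rightarrow> bool" where
  "is_leaf n F v \<longleftrightarrow> v \<in> Vset n \<and> (\<exists>w. (v,w) \<in> F) \<and> \<not> (\<exists>u. (u,v) \<in> F)"

definition stop_vertex :: "nat \<Rightarrow> nat \<Rightarrow> (nat \<times> nat) set \<Rightarrow> nat \<Rightarrow> nat \<Rightarrow> bool" where
  "stop_vertex n r F l v \<longleftrightarrow> v \<in> Rset n r \<or> card {u. (u,v) \<in> F} \<ge> 2 \<or> v < l"

text \<open>The path lambda_l, as the list of its vertices (from l to the stopping vertex);
  its length (number of edges) is length vs - 1.\<close>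
definition trim_path :: "nat \<Rightarrow> nat \<Rightarrow> (nat \<times> nat) set \<Rightarrow> nat \<Rightarrow> nat list \<Rightarrow> bool" where
  "trim_path n r F l vs \<longleftrightarrow>
     length vs \<ge> 2 \<and> hd vs = l
   \<and> (\<forall>i. i + 1 < length vs \<longrightarrow> (vs ! i, vs ! (i+1)) \<in> F)
   \<and> stop_vertex n r F l (last vs)
   \<and> (\<forall>i. 0 < i \<and> i + 1 < length vs \<longrightarrow> \<not> stop_vertex n r F l (vs ! i))"

definition path_edges :: "nat list \<Rightarrow> (nat \<times> nat) set" where
  "path_edges vs = {(vs ! i, vs ! (i+1)) | i. i + 1 < length vs}"

text \<open>trim_run n r F ps: the trimming algorithm started at F produces the successive
  paths ps = [lambda_{l^1}, ..., lambda_{l^N}] and ends with the empty set.\<close>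
inductive trim_run :: "nat \<Rightarrow> nat \<Rightarrow> (nat \<times> nat) set \<Rightarrow> nat list list \<Rightarrow> bool" where
  stop: "trim_run n r {} []"
| step: "\<lbrakk> F \<noteq> {}; l = Max {v. is_leaf n F v}; trim_path n r F l vs;
           trim_run n r (F - path_edges vs) ps \<rbrakk> \<Longrightarrow> trim_run n r F (vs # ps)"

definition condC :: "nat \<Rightarrow> nat \<Rightarrow> (nat \<times> nat) set \<Rightarrow> bool" where
  "condC n r F \<longleftrightarrow> (\<exists>ps. trim_run n r F ps \<and> (\<forall>vs\<in>set ps. even (length vs - 1)))"

definition condC_rel :: "nat \<Rightarrow> nat \<Rightarrow> nat set set \<Rightarrow> (nat \<times> nat) set \<Rightarrow> bool" where
  "condC_rel n r M0 F \<longleftrightarrow> (\<exists>ps. trim_run n r F ps \<and>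
      (\<forall>vs\<in>set ps. even (length vs - 1) \<and> {vs ! 0, vs ! 1} \<in> M0))"

end

theory Submission
  imports Defs
begin

lemma run_props:
  assumes "trim_run n r F ps"
  shows "F = (\<Union>vs\<in>set ps. path_edges vs) \<and> (\<forall>vs\<in>set ps. length vs \<ge> 2)
       \<and> (\<forall>vs\<in>set ps. \<forall>ws\<in>set ps. vs \<noteq> ws \<longrightarrow> path_edges vs \<inter> path_edges ws = {})"
  using assms
proof (induction rule: trim_run.induct)
  case (stop n r) then show ?case by simp
next
  case (step F l n r vs ps)
  have sub: "path_edges vs \<subseteq> F" using step.hyps(3) unfolding trim_path_def path_edges_def by auto
  have len: "length vs \<ge> 2" using step.hyps(3) unfolding trim_path_def by auto
  from step.IH have eq: "F - path_edges vs = (\<Union>ws\<in>set ps. path_edges ws)" by blast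
  show ?case
  proof (intro conjI)
    show "F = (\<Union>ws\<in>set (vs#ps). path_edges ws)" using sub eq by auto
    show "\<forall>ws\<in>set (vs # ps). length ws \<ge> 2" using len step.IH by auto
    show "\<forall>x\<in>set (vs # ps). \<forall>y\<in>set (vs # ps). x \<noteq> y \<longrightarrow> path_edges x \<inter> path_edges y = {}"
      using step.IH eq by auto
  qed
qed

lemma chain_trancl:
  assumes "\<forall>i. i+1 < length vs \<longrightarrow> (vs!i, vs!(i+1)) \<in> F"
  shows "i < j \<Longrightarrow> j < length vs \<Longrightarrow> (vs!i, vs!j) \<in> F\<^sup>+"
proof (induction j)
  case 0 then show ?case by simp
next
  case (Suc j)
  have e: "(vs!j, vs!(Suc j)) \<in> F" using assms Suc.prems by auto
  show ?case
  proof (cases "i = j")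
    case True then show ?thesis using e by auto
  next
    case False
    then have "(vs!i, vs!j) \<in> F\<^sup>+" using Suc by auto
    then show ?thesis using e by (meson trancl_into_trancl)
  qed
qed

theorem lemma8:
  fixes n r :: nat and a :: "nat \<Rightarrow> nat \<Rightarrow> complex"
  assumes "even n" and "n \<ge> 2" and "r \<ge> 1"
    and skew: "\<forall>i\<in>Vset n \<union> Rset n r. \<forall>j\<in>Vset n \<union> Rset n r. a j i = - a i j"
    and colsum: "\<forall>j\<in>Vset n \<union> Rset n r. (\<Sum>i\<in>Vset n \<union> Rset n r. a i j) = 0"
  shows "{F. spanning_forest n r a F \<and> condC n r F}
         = (\<Union>M0\<in>perfect_matchings n a.
              {F. spanning_forest n r a F \<and> compatible M0 F \<and> condC_rel n r M0 F})"
proof (rule set_eqI, rule iffI)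
  fix F assume "F \<in> {F. spanning_forest n r a F \<and> condC n r F}"
  then have sf: "spanning_forest n r a F" and "condC n r F" by auto
  then obtain ps where run: "trim_run n r F ps" and ev: "\<forall>vs\<in>set ps. even (length vs - 1)"
    unfolding condC_def by auto
  from run_props[OF run] have Feq: "F = (\<Union>vs\<in>set ps. path_edges vs)"
    and len: "\<forall>vs\<in>set ps. length vs \<ge> 2"
    and disj: "\<forall>vs\<in>set ps. \<forall>ws\<in>set ps. vs \<noteq> ws \<longrightarrow> path_edges vs \<inter> path_edges ws = {}"
    by auto
  have pe: "\<And>vs i. vs \<in> set ps \<Longrightarrow> i+1 < length vs \<Longrightarrow> (vs!i, vs!(i+1)) \<in> F"
    using Feq unfolding path_edges_def by blast
  have src: "\<And>x y. (x,y) \<in> F \<Longrightarrow> x \<in> Vset n"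
    using sf unfolding spanning_forest_def by blast
  have Fsub: "\<And>x y. (x,y) \<in> F \<Longrightarrow> x \<noteq> y \<and> a x y \<noteq> 0"
    using sf unfolding spanning_forest_def by blast
  have fn: "\<And>x y z. (x,y)\<in>F \<Longrightarrow> (x,z) \<in> F \<Longrightarrow> y = z"
  proof -
    fix x y z assume h: "(x,y)\<in>F" "(x,z) \<in> F"
    then have "x \<in> Vset n" using src by blast
    then have "\<exists>!w. (x,w) \<in> F" using sf unfolding spanning_forest_def by blast
    then show "y = z" using h by blast
  qed
  have acyc: "acyclic F" using sf unfolding spanning_forest_def by auto
  have uniq: "\<And>vs ws i j. vs\<in>set ps \<Longrightarrow> ws\<in>set ps \<Longrightarrow> i+1<length vs \<Longrightarrow> j+1<length ws
      \<Longrightarrow> vs!i = ws!j \<Longrightarrow> vs = ws \<and> i = j"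
  proof -
    fix vs ws i j assume h: "vs\<in>set ps" "ws\<in>set ps" "i+1<length vs" "j+1<length ws" "vs!i = ws!j"
    have "vs!(i+1) = ws!(j+1)" using pe[OF h(1,3)] pe[OF h(2,4)] h(5) fn by metis
    then have "(vs!i, vs!(i+1)) \<in> path_edges vs \<inter> path_edges ws"
      unfolding path_edges_def using h by (metis (mono_tags, lifting) IntI mem_Collect_eq)
    then have vw: "vs = ws" using disj h(1,2) by blast
    moreover have "i = j"
    proof (rule ccontr)
      assume "i \<noteq> j"
      have ch: "\<forall>i. i+1 < length vs \<longrightarrow> (vs!i, vs!(i+1)) \<in> F" using pe h(1) by blast
      show False
      proof (cases "i < j")
        case True
        then have "(vs!i, vs!j) \<in> F\<^sup>+" using chain_trancl[OF ch, of i j] h vw by simp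
        then show False using acyc h(5) vw unfolding acyclic_def by auto
      next
        case False
        then have "j < i" using \<open>i \<noteq> j\<close> by auto
        then have "(vs!j, vs!i) \<in> F\<^sup>+" using chain_trancl[OF ch, of j i] h vw by simp
        then show False using acyc h(5) vw unfolding acyclic_def by auto
      qed
    qed
    ultimately show "vs = ws \<and> i = j" by blast
  qed
  define M where "M = (\<Union>vs\<in>set ps. {{vs!(2*k), vs!(2*k+1)} | k. 2*k+2 < length vs})"
  have Msub: "M \<subseteq> {{i,j} | i j. i \<in> Vset n \<and> j \<in> Vset n \<and> i \<noteq> j \<and> a i j \<noteq> 0}"
  proof
    fix e assume "e \<in> M"
    then obtain vs k where h: "vs \<in> set ps" "2*k+2 < length vs" "e = {vs!(2*k), vs!(2*k+1)}"
      unfolding M_def by blast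
    have e1: "(vs!(2*k), vs!(2*k+1)) \<in> F" using pe[OF h(1)] h(2) by auto
    have e2: "(vs!(2*k+1), vs!(2*k+1+1)) \<in> F" using pe[OF h(1)] h(2) by auto
    show "e \<in> {{i,j} | i j. i \<in> Vset n \<and> j \<in> Vset n \<and> i \<noteq> j \<and> a i j \<noteq> 0}"
      using src[OF e1] src[OF e2] Fsub[OF e1] h(3) by blast
  qed
  have cover: "\<And>v. v \<in> Vset n \<Longrightarrow> \<exists>!e. e \<in> M \<and> v \<in> e"
  proof -
    fix v assume v: "v \<in> Vset n"
    then obtain w where "(v,w) \<in> F" using sf unfolding spanning_forest_def by blast
    then obtain vs i where h: "vs \<in> set ps" "i+1 < length vs" "vs!i = v"
      using Feq unfolding path_edges_def by blast
    define k where "k = i div 2"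
    have ev1: "even (length vs - 1)" using ev h(1) by auto
    have l2: "length vs \<ge> 2" using len h(1) by auto
    have k2: "2*k+2 < length vs" using ev1 l2 h(2) unfolding k_def by presburger
    have vin: "v = vs!(2*k) \<or> v = vs!(2*k+1)" using h(3) unfolding k_def
      by (metis dvd_mult_div_cancel odd_two_times_div_two_succ)
    let ?e = "{vs!(2*k), vs!(2*k+1)}"
    have eM: "?e \<in> M" unfolding M_def using h(1) k2 by blast
    show "\<exists>!e. e \<in> M \<and> v \<in> e"
    proof (rule ex1I[of _ ?e])
      show "?e \<in> M \<and> v \<in> ?e" using eM vin by auto
    next
      fix e' assume e': "e' \<in> M \<and> v \<in> e'"
      then obtain ws m where g: "ws \<in> set ps" "2*m+2 < length ws" "e' = {ws!(2*m), ws!(2*m+1)}"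
        unfolding M_def by blast
      obtain q where q: "q = 2*m \<or> q = 2*m+1" "ws!q = v" using e' g(3) by auto
      have "q+1 < length ws" using q g(2) by auto
      then have wq: "ws = vs \<and> q = i" using uniq[OF g(1) h(1) _ h(2)] q(2) h(3) by simp
      then have "ws = vs" by simp
      have "q = i" using wq by simp
      then have "m = k" using q(1) unfolding k_def by auto
      note \<open>ws = vs\<close> this
      then show "e' = ?e" using g(3) by simp
    qed
  qed
  have PM: "M \<in> perfect_matchings n a"
    unfolding perfect_matchings_def using Msub cover by blast
  have comp: "compatible M F"
    unfolding compatible_def
  proof
    fix e assume "e \<in> M"
    then obtain vs k where h: "vs \<in> set ps" "2*k+2 < length vs" "e = {vs!(2*k), vs!(2*k+1)}"
      unfolding M_def by blast
    have e1: "(vs!(2*k), vs!(2*k+1)) \<in> F" using pe[OF h(1)] h(2) by auto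
    then show "\<exists>i j. (i, j) \<in> F \<and> e = {i, j}" using h(3) by blast
  qed
  have crel: "condC_rel n r M F"
    unfolding condC_rel_def
  proof (intro exI conjI ballI)
    show "trim_run n r F ps" by (rule run)
  next
    fix vs assume vs: "vs \<in> set ps"
    show "even (length vs - 1)" using ev vs by auto
    have "even (length vs - 1)" "length vs \<ge> 2" using ev vs len by auto
    then have "2*0+2 < length vs" by presburger
    then have "{vs!(2*0), vs!(2*0+1)} \<in> M" unfolding M_def using vs by blast
    then show "{vs ! 0, vs ! 1} \<in> M" by (simp only: mult_0_right add_0)
  qed
  show "F \<in> (\<Union>M0\<in>perfect_matchings n a.
              {F. spanning_forest n r a F \<and> compatible M0 F \<and> condC_rel n r M0 F})"
    using PM sf comp crel by blast
next
  fix F assume "F \<in> (\<Union>M0\<in>perfect_matchings n a.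
              {F. spanning_forest n r a F \<and> compatible M0 F \<and> condC_rel n r M0 F})"
  then show "F \<in> {F. spanning_forest n r a F \<and> condC n r F}"
    unfolding condC_def condC_rel_def by blast
qed

end
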